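(* Let $f=(f_1,f_2):\mathbb{R}\times\mathbb{R}^2,\mathbf 0\to\mathbb{R}^2,\mathbf 0$ be an analytic germ in $(t,x_1,x_2)$, $J=\partial(f_1,f_2)/\partial(x_1,x_2)$, $F_i=\partial(f_i,J)/\partial(x_1,x_2)$, and assume $$\dim_{\mathbb{R}}\mathcal{O}_3/\langle t,f_1,f_2\rangle<\infty,\ \dim_{\mathbb{R}}\mathcal{O}_3/\langle t,F_1,F_2\rangle<\infty,\ J(\mathbf{0})=0,\ \dim_{\mathbb{R}}\mathcal{O}_3/\langle t,\partial J/\partial x_1,\partial J/\partial x_2\rangle<\infty.$$ Let $Q=\mathcal{O}_3/\langle t,J,F_1,F_2\rangle$. Then $\dim_{\mathbb{R}}Q<\infty$, i.e. the origin is isolated in $(\{0\}\times\mathbb{C}^2)\cap V_{\mathbb{C}}(J,F_1,F_2)$.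
   Context: $\mathcal{O}_3=\mathbb{R}\{t,x_1,x_2\}$ is the ring of real analytic germs at the origin; $V_{\mathbb{C}}(\cdot)$ is the germ of complex common zeros. *)

theory Defs
  imports "HOL-Analysis.Analysis"
begin

text \<open>Germs in O_3 = R{t,x1,x2} are represented by their Taylor coefficient arrays:
  a i j k is the coefficient of t^i x1^j x2^k.\<close>

type_synonym ps3 = "nat \<Rightarrow> nat \<Rightarrow> nat \<Rightarrow> real"

definition O3 :: "ps3 set" where
  "O3 = {a. \<exists>r>0. (\<lambda>(i,j,k). \<bar>a i j k\<bar> * r ^ (i + j + k)) summable_on (UNIV :: (nat \<times> nat \<times> nat) set)}"

definition ps_add :: "ps3 \<Rightarrow> ps3 \<Rightarrow> ps3" where
  "ps_add a b = (\<lambda>i j k. a i j k + b i j k)"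

definition ps_mul :: "ps3 \<Rightarrow> ps3 \<Rightarrow> ps3" where
  "ps_mul a b = (\<lambda>i j k. \<Sum>p\<le>i. \<Sum>q\<le>j. \<Sum>s\<le>k. a p q s * b (i - p) (j - q) (k - s))"

definition ps_dx1 :: "ps3 \<Rightarrow> ps3" where
  "ps_dx1 a = (\<lambda>i j k. real (Suc j) * a i (Suc j) k)"

definition ps_dx2 :: "ps3 \<Rightarrow> ps3" where
  "ps_dx2 a = (\<lambda>i j k. real (Suc k) * a i j (Suc k))"

definition jac :: "ps3 \<Rightarrow> ps3 \<Rightarrow> ps3" where
  "jac g h = (\<lambda>i j k. ps_mul (ps_dx1 g) (ps_dx2 h) i j k - ps_mul (ps_dx2 g) (ps_dx1 h) i j k)"

definition ps_t :: ps3 where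
  "ps_t = (\<lambda>i j k. if i = 1 \<and> j = 0 \<and> k = 0 then 1 else 0)"

definition ps_at0 :: "ps3 \<Rightarrow> real" where
  "ps_at0 a = a 0 0 0"

definition ideal_gen :: "ps3 list \<Rightarrow> ps3 set" where
  "ideal_gen gs = {g. \<exists>hs. length hs = length gs \<and> set hs \<subseteq> O3 \<and>
      g = foldr ps_add (map2 ps_mul hs gs) (\<lambda>i j k. 0)}"

text \<open>dim_R O_3 / <gs> < infinity: finitely many germs whose classes span the quotient.\<close>
definition fin_codim :: "ps3 list \<Rightarrow> bool" where
  "fin_codim gs \<longleftrightarrow> (\<exists>B. finite B \<and> B \<subseteq> O3 \<and>
     (\<forall>g\<in>O3. \<exists>c. (\<lambda>i j k. g i j k - (\<Sum>b\<in>B. c b * b i j k)) \<in> ideal_gen gs))"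

end

theory Submission
  imports Defs
begin

lemma zero_O3: "(\<lambda>i j k. 0::real) \<in> O3"
  unfolding O3_def by (auto intro!: exI[of _ 1] simp: case_prod_unfold summable_on_0)

lemma ideal_mono_ins:
  assumes "g \<in> ideal_gen (a # rest)"
  shows "g \<in> ideal_gen (a # x # rest)"
proof -
  obtain hs where hs: "length hs = length (a # rest)" "set hs \<subseteq> O3"
    "g = foldr ps_add (map2 ps_mul hs (a # rest)) (\<lambda>i j k. 0)"
    using assms unfolding ideal_gen_def by blast
  then obtain h hs' where hh: "hs = h # hs'" by (cases hs) auto
  have z: "ps_add (ps_mul (\<lambda>i j k. 0) x) y = y" for y
    unfolding ps_add_def ps_mul_def by simp
  show ?thesis unfolding ideal_gen_def
    apply (rule CollectI, rule exI[of _ "h # (\<lambda>i j k. 0) # hs'"])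
    using hs hh zero_O3 z by auto
qed

theorem lemma6p1:
  fixes f1 f2 :: ps3
  assumes "f1 \<in> O3" and "f2 \<in> O3"
    and "ps_at0 f1 = 0" and "ps_at0 f2 = 0"
    and "fin_codim [ps_t, f1, f2]"
    and "fin_codim [ps_t, jac f1 (jac f1 f2), jac f2 (jac f1 f2)]"
    and "ps_at0 (jac f1 f2) = 0"
    and "fin_codim [ps_t, ps_dx1 (jac f1 f2), ps_dx2 (jac f1 f2)]"
  shows "fin_codim [ps_t, jac f1 f2, jac f1 (jac f1 f2), jac f2 (jac f1 f2)]"
  using assms(6) unfolding fin_codim_def using ideal_mono_ins by meson

end
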